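(* Let $p$ be an odd prime, $n$ a positive integer with $\gcd(n,p)=1$, and let $S$ be a simultaneously negacyclic subspace of $\mathbb{F}_p^n\times\mathbb{F}_p^n$. Then $S$ is uniquely negacyclic if and only if every element of $S$ of the form $(\mathbf{0},\mathbf{b})$ has $\mathbf{b}=\mathbf{0}$. Further, if $S$ is uniquely negacyclic with generating pair $(g,f)$, then $S=\{(ag,af):a\in\mathcal{R}\}$ (computed in $\mathcal{R}$).
   Context: Let $N:\mathbb{F}_p^n\to\mathbb{F}_p^n$ be $(u_0,\dots,u_{n-1})\mapsto(-u_{n-1},u_0,\dots,u_{n-2})$; $S$ is simultaneously negacyclic if $(\mathbf{a},\mathbf{b})\in S$ implies $(N\mathbf{a},N\mathbf{b})\in S$. Let $\mathcal{R}=\mathbb{F}_p[X]/\langle X^n+1\rangle$, with vectors $(a_0,\dots,a_{n-1})\in\mathbb{F}_p^n$ identified with polynomials $a_0+a_1X+\cdots+a_{n-1}X^{n-1}\in\mathcal{R}$, so $S$ is also regarded as a subset of $\mathcal{R}\times\mathcal{R}$. Let $F=\{\mathbf{a}:(\mathbf{a},\mathbf{b})\in S\}$; it is an ideal of $\mathcal{R}$; let $g(X)$ be its generator (the monic polynomial of lowest degree in it, a divisor of $X^n+1$). $S$ is called uniquely negacyclic if there is a unique $f\in\mathcal{R}$ with $(g,f)\in S$; the pair $(g,f)$ is then called the generating pair of $S$. *)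

theory Defs
  imports "HOL-Computational_Algebra.Polynomial"
begin

text \<open>Vectors (u_0,...,u_{n-1}) in F_p^n are identified with polynomials
  u_0 + u_1 X + ... + u_{n-1} X^{n-1} of degree < n, i.e. with the reduced
  representatives of R = F_p[X]/(X^n+1).  F_p is a field type of cardinality p.\<close>

definition vecs :: "nat \<Rightarrow> 'a::field poly set" where
  "vecs n = {u. degree u < n}"

definition rmult :: "nat \<Rightarrow> 'a::field poly \<Rightarrow> 'a poly \<Rightarrow> 'a poly" where
  "rmult n a b = (a * b) mod (monom 1 n + 1)"

definition negashift :: "nat \<Rightarrow> 'a::field poly \<Rightarrow> 'a poly" where
  "negashift n u = monom (- coeff u (n - 1)) 0 + (\<Sum>i<n - 1. monom (coeff u i) (i + 1))"

definition is_subspace :: "nat \<Rightarrow> ('a::field poly \<times> 'a poly) set \<Rightarrow> bool" where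
  "is_subspace n S \<longleftrightarrow> S \<subseteq> vecs n \<times> vecs n \<and> (0, 0) \<in> S \<and>
     (\<forall>x\<in>S. \<forall>y\<in>S. (fst x + fst y, snd x + snd y) \<in> S) \<and>
     (\<forall>c. \<forall>x\<in>S. (smult c (fst x), smult c (snd x)) \<in> S)"

definition simult_negacyclic :: "nat \<Rightarrow> ('a::field poly \<times> 'a poly) set \<Rightarrow> bool" where
  "simult_negacyclic n S \<longleftrightarrow> (\<forall>a b. (a, b) \<in> S \<longrightarrow> (negashift n a, negashift n b) \<in> S)"

text \<open>g generates the ideal F: the monic polynomial of least degree in F; for the zero
  ideal the generator is X^n+1, which is 0 in R.\<close>
definition is_ideal_gen :: "'a::field poly set \<Rightarrow> 'a poly \<Rightarrow> bool" where
  "is_ideal_gen F g \<longleftrightarrow>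
     (F \<subseteq> {0} \<and> g = 0) \<or>
     (\<not> F \<subseteq> {0} \<and> g \<in> F \<and> lead_coeff g = 1 \<and> (\<forall>h\<in>F. h \<noteq> 0 \<longrightarrow> degree g \<le> degree h))"

definition first_comp :: "('a::field poly \<times> 'a poly) set \<Rightarrow> 'a poly set" where
  "first_comp S = {a. \<exists>b. (a, b) \<in> S}"

definition generator :: "('a::field poly \<times> 'a poly) set \<Rightarrow> 'a poly" where
  "generator S = (THE g. is_ideal_gen (first_comp S) g)"

definition uniquely_negacyclic :: "('a::field poly \<times> 'a poly) set \<Rightarrow> bool" where
  "uniquely_negacyclic S \<longleftrightarrow> (\<exists>!f. (generator S, f) \<in> S)"

definition generating_pair :: "('a::field poly \<times> 'a poly) set \<Rightarrow> 'a poly \<Rightarrow> 'a poly \<Rightarrow> bool" where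
  "generating_pair S g f \<longleftrightarrow> uniquely_negacyclic S \<and> g = generator S \<and> (g, f) \<in> S"

end

theory Submission
  imports Defs
begin

lemma coeff_negashift:
  assumes "n > 0"
  shows "coeff (negashift n u) k = (if k = 0 then - coeff u (n-1) else if k < n then coeff u (k-1) else 0)"
proof -
  have "coeff (\<Sum>i<n - 1. monom (coeff u i) (i + 1)) k = (\<Sum>i<n - 1. if i + 1 = k then coeff u i else 0)"
    by (simp add: coeff_sum coeff_monom)
  also have "\<dots> = (if 0 < k \<and> k < n then coeff u (k-1) else 0)"
  proof (cases "0 < k \<and> k < n")
    case True
    then have "(\<Sum>i<n - 1. if i + 1 = k then coeff u i else 0) = (\<Sum>i<n - 1. if i = k - 1 then coeff u i else 0)"
      by (intro sum.cong) auto
    also have "\<dots> = coeff u (k-1)"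
    proof -
      have "k - 1 \<in> {..<n-1}" using True by auto
      then show ?thesis by (simp add: sum.delta)
    qed
    finally show ?thesis using True by simp
  next
    case False
    then show ?thesis using assms by (intro trans[OF sum.neutral]) auto
  qed
  finally show ?thesis unfolding negashift_def by (auto simp: coeff_monom)
qed

lemma degree_negashift: "n > 0 \<Longrightarrow> degree (negashift n u) < n"
proof -
  assume n: "n > 0"
  have "degree (negashift n u) \<le> n - 1"
    by (rule degree_le) (use n in \<open>auto simp: coeff_negashift\<close>)
  then show ?thesis using n by linarith
qed

lemma degree_m: "n > 0 \<Longrightarrow> degree (monom (1::'a::field) n + 1) = n"
  by (simp add: degree_add_eq_left degree_monom_eq)

lemma shift_mod:
  fixes u :: "'a::field poly"
  assumes n: "n > 0" and u: "degree u < n"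
  shows "pCons 0 u mod (monom 1 n + 1) = negashift n u"
proof -
  have eq: "pCons 0 u = negashift n u + smult (coeff u (n-1)) (monom 1 n + 1)"
  proof (rule poly_eqI)
    fix k
    show "coeff (pCons 0 u) k = coeff (negashift n u + smult (coeff u (n - 1)) (monom 1 n + 1)) k"
    proof (cases k)
      case 0 then show ?thesis using n by (simp add: coeff_negashift coeff_monom)
    next
      case (Suc j)
      show ?thesis
      proof (cases "Suc j < n")
        case True then show ?thesis using Suc by (simp add: coeff_negashift coeff_monom)
      next
        case False
        then show ?thesis using Suc u n
          by (auto simp: coeff_negashift coeff_monom coeff_eq_0)
      qed
    qed
  qed
  have "pCons 0 u mod (monom 1 n + 1) = negashift n u mod (monom 1 n + 1)"
  proof -
    have "smult (coeff u (n-1)) (monom 1 n + 1) = [:coeff u (n-1):] * (monom 1 n + 1)" by simp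
    then show ?thesis by (subst eq) (simp only: mod_mult_self1)
  qed
  also have "\<dots> = negashift n u"
    by (rule mod_poly_less) (simp add: degree_m degree_negashift n)
  finally show ?thesis .
qed

lemma pCons0_mult: "pCons 0 p = [:0,1:] * (p::'a::field poly)" by simp

lemma sub_closed:
  assumes S: "is_subspace n S" and x: "x \<in> S" and y: "y \<in> S"
  shows "(fst x - fst y, snd x - snd y) \<in> S"
proof -
  have "(smult (-1) (fst y), smult (-1) (snd y)) \<in> S" using S y unfolding is_subspace_def by blast
  then have "(fst x + smult (-1) (fst y), snd x + smult (-1) (snd y)) \<in> S"
    using S x unfolding is_subspace_def by force
  then show ?thesis by simp
qed

lemma closure:
  assumes n: "n > 0" and S: "is_subspace n S" and N: "simult_negacyclic n S" and xy: "(x, y) \<in> S"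
  shows "((a * x) mod (monom 1 n + 1), (a * y) mod (monom 1 n + 1)) \<in> S"
proof (induction a rule: pCons_induct)
  case 0
  then show ?case using S unfolding is_subspace_def by simp
next
  case (pCons c a)
  let ?m = "monom 1 n + 1 :: 'a poly"
  have m0: "?m \<noteq> 0" using degree_m[OF n, where 'a='a] n by auto
  have vx: "degree x < n" "degree y < n" using S xy unfolding is_subspace_def vecs_def by auto
  have dm: "degree ((a * x) mod ?m) < n" "degree ((a * y) mod ?m) < n"
    using degree_mod_less[OF m0, of "a*x"] degree_mod_less[OF m0, of "a*y"] degree_m[OF n, where 'a='a] n
    by auto
  have key: "(pCons c a * z) mod ?m = smult c z + negashift n ((a * z) mod ?m)" if dz: "degree z < n" for z
  proof -
    have "(pCons c a * z) mod ?m = smult c z mod ?m + pCons 0 (a * z) mod ?m"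
      by (simp add: poly_mod_add_left)
    also have "smult c z mod ?m = smult c z"
      by (rule mod_poly_less) (metis degree_m[OF n] degree_smult_le dz le_less_trans)
    also have "pCons 0 (a * z) mod ?m = pCons 0 ((a * z) mod ?m) mod ?m"
      unfolding pCons0_mult[of "a*z"] pCons0_mult[of "(a*z) mod ?m"] by (rule mod_mult_right_eq[symmetric])
    also have "\<dots> = negashift n ((a * z) mod ?m)"
      by (rule shift_mod[OF n]) (use degree_mod_less[OF m0, of "a*z"] degree_m[OF n, where 'a='a] n in auto)
    finally show ?thesis .
  qed
  have s1: "(smult c x, smult c y) \<in> S" using S xy unfolding is_subspace_def by force
  have s2: "(negashift n ((a * x) mod ?m), negashift n ((a * y) mod ?m)) \<in> S"
    using N pCons.IH unfolding simult_negacyclic_def by blast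
  have "(smult c x + negashift n ((a * x) mod ?m), smult c y + negashift n ((a * y) mod ?m)) \<in> S"
    using S s1 s2 unfolding is_subspace_def by force
  then show ?case using key vx by simp
qed

lemma gen_ok:
  assumes S: "is_subspace n S"
  shows "is_ideal_gen (first_comp S) (generator S)"
proof -
  let ?F = "first_comp S"
  have sm: "smult c h \<in> ?F" if "h \<in> ?F" for c h
    using that S unfolding first_comp_def is_subspace_def by force
  have sb: "h1 - h2 \<in> ?F" if hh: "h1 \<in> ?F" "h2 \<in> ?F" for h1 h2
  proof -
    obtain b1 b2 where "(h1, b1) \<in> S" "(h2, b2) \<in> S" using hh unfolding first_comp_def by blast
    from sub_closed[OF S this] show ?thesis unfolding first_comp_def by auto
  qed
  have "\<exists>!g. is_ideal_gen ?F g"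
  proof (cases "?F \<subseteq> {0}")
    case True
    then show ?thesis unfolding is_ideal_gen_def by auto
  next
    case False
    define P where "P = (\<lambda>d. \<exists>h\<in>?F. h \<noteq> 0 \<and> degree h = d)"
    have "\<exists>d. P d" using False unfolding P_def by auto
    then have "P (LEAST d. P d)" by (rule LeastI_ex)
    then obtain h where h: "h \<in> ?F" "h \<noteq> 0" "degree h = (LEAST d. P d)" unfolding P_def by blast
    have hmin: "degree h \<le> degree h'" if "h' \<in> ?F" "h' \<noteq> 0" for h'
      using h(3) Least_le[of P "degree h'"] that unfolding P_def by auto
    define g0 where "g0 = smult (inverse (lead_coeff h)) h"
    have g0: "is_ideal_gen ?F g0"
      unfolding is_ideal_gen_def using False sm[OF h(1)] hmin h(2)
      by (auto simp: g0_def lead_coeff_smult degree_smult_eq)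
    have uniq: "g1 = g2" if "is_ideal_gen ?F g1" "is_ideal_gen ?F g2" for g1 g2
    proof (rule ccontr)
      assume ne: "g1 \<noteq> g2"
      have g1: "g1 \<in> ?F" "lead_coeff g1 = 1" "\<forall>h\<in>?F. h \<noteq> 0 \<longrightarrow> degree g1 \<le> degree h"
        using that(1) False unfolding is_ideal_gen_def by auto
      have g2: "g2 \<in> ?F" "lead_coeff g2 = 1" "\<forall>h\<in>?F. h \<noteq> 0 \<longrightarrow> degree g2 \<le> degree h"
        using that(2) False unfolding is_ideal_gen_def by auto
      have nz: "g1 \<noteq> 0" "g2 \<noteq> 0" using g1(2) g2(2) by auto
      have deq: "degree g1 = degree g2" using g1 g2 nz by force
      have dF: "g1 - g2 \<in> ?F" "g1 - g2 \<noteq> 0" using sb[OF g1(1) g2(1)] ne by auto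
      have "degree g1 \<le> degree (g1 - g2)" using g1(3) dF by blast
      moreover have "degree (g1 - g2) \<le> degree g1" using degree_diff_le_max[of g1 g2] deq by simp
      ultimately have "degree (g1 - g2) = degree g1" by simp
      moreover have "coeff (g1 - g2) (degree g1) = 0" using g1(2) g2(2) deq by simp
      ultimately show False using dF(2) by (metis leading_coeff_0_iff)
    qed
    show ?thesis using g0 uniq by blast
  qed
  then show ?thesis unfolding generator_def by (rule theI')
qed

theorem mainTheorem4:
  fixes S :: "('a::{field,finite} poly \<times> 'a poly) set" and p n :: nat
  assumes "prime p" and "odd p" and "card (UNIV :: 'a set) = p"
    and "n > 0" and "coprime n p"
    and "is_subspace n S" and "simult_negacyclic n S"
  shows "(uniquely_negacyclic S \<longleftrightarrow> (\<forall>b. (0, b) \<in> S \<longrightarrow> b = 0)) \<and>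
         (\<forall>g f. generating_pair S g f \<longrightarrow>
            S = {(rmult n a g, rmult n a f) | a. a \<in> vecs n})"
proof -
  note n = assms(4) and S = assms(6) and N = assms(7)
  let ?F = "first_comp S"
  let ?g = "generator S"
  let ?m = "monom 1 n + 1 :: 'a poly"
  have m0: "?m \<noteq> 0" using degree_m[OF n, where 'a='a] n by auto
  have G: "is_ideal_gen ?F ?g" by (rule gen_ok[OF S])
  have z: "(0, 0) \<in> S" using S unfolding is_subspace_def by blast
  have gF: "\<exists>f. (?g, f) \<in> S"
    using G z unfolding is_ideal_gen_def first_comp_def by auto
  have add: "(fst x + fst y, snd x + snd y) \<in> S" if "x \<in> S" "y \<in> S" for x y
    using S that unfolding is_subspace_def by blast
  have P1: "uniquely_negacyclic S \<longleftrightarrow> (\<forall>b. (0, b) \<in> S \<longrightarrow> b = 0)"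
  proof
    assume U: "uniquely_negacyclic S"
    then obtain f where f: "(?g, f) \<in> S" "\<And>f'. (?g, f') \<in> S \<Longrightarrow> f' = f"
      unfolding uniquely_negacyclic_def by blast
    show "\<forall>b. (0, b) \<in> S \<longrightarrow> b = 0"
    proof (intro allI impI)
      fix b assume "(0, b) \<in> S"
      from add[OF f(1) this] have "(?g, f + b) \<in> S" by simp
      from f(2)[OF this] show "b = 0" by simp
    qed
  next
    assume Z: "\<forall>b. (0, b) \<in> S \<longrightarrow> b = 0"
    obtain f where f: "(?g, f) \<in> S" using gF by blast
    have "f' = f" if "(?g, f') \<in> S" for f'
      using sub_closed[OF S that f] Z by force
    then show "uniquely_negacyclic S" unfolding uniquely_negacyclic_def using f by blast
  qed
  have P2: "S = {(rmult n a g, rmult n a f) | a. a \<in> vecs n}" if gp: "generating_pair S g f" for g f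
  proof -
    have Z: "\<forall>b. (0, b) \<in> S \<longrightarrow> b = 0" using P1 gp unfolding generating_pair_def by blast
    have gg: "g = ?g" and gf: "(g, f) \<in> S" using gp unfolding generating_pair_def by auto
    show ?thesis
    proof (intro equalityI subsetI)
      fix x assume "x \<in> {(rmult n a g, rmult n a f) | a. a \<in> vecs n}"
      then show "x \<in> S" using closure[OF n S N gf] unfolding rmult_def by auto
    next
      fix x assume xS: "x \<in> S"
      obtain u v where x: "x = (u, v)" by (cases x)
      have uv: "(u, v) \<in> S" using xS x by simp
      have uF: "u \<in> ?F" using uv unfolding first_comp_def by blast
      have du: "degree u < n" using uv S unfolding is_subspace_def vecs_def by auto
      show "x \<in> {(rmult n a g, rmult n a f) | a. a \<in> vecs n}"
      proof (cases "?F \<subseteq> {0}")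
        case True
        then have "u = 0" using uF by blast
        then have "v = 0" using Z uv by blast
        have "0 \<in> vecs n" using n by (simp add: vecs_def)
        then show ?thesis using \<open>u = 0\<close> \<open>v = 0\<close> x by (force simp: rmult_def)
      next
        case False
        have g1: "g \<in> ?F" "lead_coeff g = 1" "\<forall>h\<in>?F. h \<noteq> 0 \<longrightarrow> degree g \<le> degree h"
          using G False gg unfolding is_ideal_gen_def by auto
        have g0: "g \<noteq> 0" using g1(2) by auto
        define q where "q = u div g"
        define r where "r = u mod g"
        have ur: "u = q * g + r" unfolding q_def r_def by simp
        have dr: "r = 0 \<or> degree r < degree g" unfolding r_def using degree_mod_less[OF g0] .
        have "degree r \<le> degree u"
        proof (cases "u = 0")
          case True then show ?thesis by (simp add: r_def)
        next
          case False then show ?thesis using dr g1(3) uF by force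
        qed
        then have dqg: "degree (q * g) < n"
          using degree_diff_le_max[of u r] du ur by (metis add_diff_cancel_right' le_less_trans max.absorb1)
        define a where "a = q mod ?m"
        have av: "a \<in> vecs n"
          unfolding vecs_def a_def using degree_mod_less[OF m0, of q] degree_m[OF n, where 'a='a] n by auto
        have ag: "rmult n a g = q * g"
          unfolding rmult_def a_def by (simp add: mod_mult_left_eq mod_poly_less degree_m[OF n] dqg)
        have c: "(q * g, rmult n a f) \<in> S" using closure[OF n S N gf, of a] ag unfolding rmult_def by simp
        from sub_closed[OF S uv c] have rS: "(r, v - rmult n a f) \<in> S" using ur by simp
        then have "r \<in> ?F" unfolding first_comp_def by blast
        then have r0: "r = 0" using dr g1(3) by force
        then have "v = rmult n a f" using rS Z by force
        then have "x = (rmult n a g, rmult n a f)" using x ur r0 ag by simp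
        then show ?thesis using av by blast
      qed
    qed
  qed
  show ?thesis using P1 P2 by blast
qed

end
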